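(* Let $\mathcal G$ be a directed acyclic graph and $W$ a subset of its vertex set such that the induced subgraph $\mathcal G|_W$ is connected. The following are equivalent: (a) $\mathcal G|_W$ is path-induced; (b) $\mathcal G/(\mathcal G|_W)$ is acyclic; (c) there is a topological sort of $\mathcal G$ in which the vertices of $W$ are consecutive. Moreover, under any of these equivalent conditions, there is a bijection between topological sorts of $\mathcal G$ in which the vertices of $W$ are consecutive and pairs consisting of a topological sort of $\mathcal G|_W$ and a topological sort of $\mathcal G/(\mathcal G|_W)$.
   Context: The induced subgraph $\mathcal G|_W$ has vertex set $W$ and all edges of $\mathcal G$ between vertices of $W$. It is path-induced if for all $x,y\in W$, every path from $x$ to $y$ in $\mathcal G$ is contained in $\mathcal G|_W$. The contraction $\mathcal G/(\mathcal G|_W)$ (for connected $\mathcal G|_W$) is the graph minor obtained by contracting every edge of $\mathcal G|_W$: its vertex set is $(\text{vertices of }\mathcal G\setminus W)+\{x_W\}$; for $x,y\ne x_W$ its edges $x\to y$ are those of $\mathcal G$; there is an edge $x_W\to y$ for each $z\in W$ and edge $z\to y$ of $\mathcal G$; an edge $x\to x_W$ for each $z\in W$ and edge $x\to z$ of $\mathcal G$; and no edges from $x_W$ to $x_W$. Connectedness is weak (underlying undirected graph). *)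

theory Defs
  imports "Graph_Theory.Graph_Theory"
begin

definition acyclic_digraph :: "('a,'b) pre_digraph \<Rightarrow> bool" where
  "acyclic_digraph G \<equiv> \<not> (\<exists>p. pre_digraph.cycle G p)"

definition path_induced :: "('a,'b) pre_digraph \<Rightarrow> 'a set \<Rightarrow> bool" where
  "path_induced G W \<equiv> \<forall>x\<in>W. \<forall>y\<in>W. \<forall>p.
      pre_digraph.apath G x p y \<longrightarrow> pre_digraph.awalk (G \<restriction> W) x p y"

text \<open>Contraction G/(G|W): the vertex x_W is None, other vertices v are Some v.
  Arcs inside W are deleted; the remaining arcs keep their identity, with endpoints
  in W redirected to x_W (so parallel arcs are kept, as in the paper).\<close>
definition contract :: "('a,'b) pre_digraph \<Rightarrow> 'a set \<Rightarrow> ('a option,'b) pre_digraph" where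
  "contract G W \<equiv>
    \<lparr> verts = Some ` (verts G - W) \<union> {None},
      arcs = {e \<in> arcs G. \<not> (tail G e \<in> W \<and> head G e \<in> W)},
      tail = (\<lambda>e. if tail G e \<in> W then None else Some (tail G e)),
      head = (\<lambda>e. if head G e \<in> W then None else Some (head G e)) \<rparr>"

definition topo_sort :: "('a,'b) pre_digraph \<Rightarrow> 'a list \<Rightarrow> bool" where
  "topo_sort G xs \<equiv> distinct xs \<and> set xs = verts G \<and>
     (\<forall>e\<in>arcs G. \<exists>i j. i < j \<and> j < length xs \<and> xs ! i = tail G e \<and> xs ! j = head G e)"

definition consecutive_in :: "'a set \<Rightarrow> 'a list \<Rightarrow> bool" where
  "consecutive_in W xs \<equiv> \<exists>as bs cs. xs = as @ bs @ cs \<and> set bs = W"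

end

theory Submission
  imports Defs
begin


definition bef :: "'a \<Rightarrow> 'a \<Rightarrow> 'a list \<Rightarrow> bool" where
  "bef a b xs \<equiv> \<exists>i j. i < j \<and> j < length xs \<and> xs ! i = a \<and> xs ! j = b"

lemma bef_Nil[simp]: "\<not> bef a b []"
  by (simp add: bef_def)

lemma bef_Cons[simp]: "bef a b (x # xs) \<longleftrightarrow> (x = a \<and> b \<in> set xs) \<or> bef a b xs"
proof
  assume "bef a b (x # xs)"
  then obtain i j where ij: "i < j" "j < Suc (length xs)" "(x#xs) ! i = a" "(x#xs) ! j = b"
    by (auto simp: bef_def)
  show "(x = a \<and> b \<in> set xs) \<or> bef a b xs"
  proof (cases i)
    case 0
    then show ?thesis using ij by (cases j) auto
  next
    case (Suc i')
    then obtain j' where "j = Suc j'" using ij by (cases j) auto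
    then show ?thesis using ij Suc unfolding bef_def by auto
  qed
next
  assume "(x = a \<and> b \<in> set xs) \<or> bef a b xs"
  then show "bef a b (x # xs)"
  proof
    assume "x = a \<and> b \<in> set xs"
    then obtain j where "j < length xs" "xs ! j = b" by (auto simp: in_set_conv_nth)
    then show ?thesis using \<open>x = a \<and> b \<in> set xs\<close> unfolding bef_def
      by (intro exI[of _ 0] exI[of _ "Suc j"]) auto
  next
    assume "bef a b xs"
    then obtain i j where "i < j" "j < length xs" "xs ! i = a" "xs ! j = b" by (auto simp: bef_def)
    then show ?thesis unfolding bef_def
      by (intro exI[of _ "Suc i"] exI[of _ "Suc j"]) auto
  qed
qed

lemma bef_append[simp]: "bef a b (xs @ ys) \<longleftrightarrow> bef a b xs \<or> (a \<in> set xs \<and> b \<in> set ys) \<or> bef a b ys"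
  by (induction xs) auto

lemma bef_set: "bef a b xs \<Longrightarrow> a \<in> set xs \<and> b \<in> set xs"
  by (induction xs) auto

lemma bef_trans: "distinct xs \<Longrightarrow> bef a b xs \<Longrightarrow> bef b c xs \<Longrightarrow> bef a c xs"
  by (induction xs) (auto dest: bef_set)

lemma bef_irrefl: "distinct xs \<Longrightarrow> \<not> bef a a xs"
  by (induction xs) (auto dest: bef_set)

lemma bef_concat: "bef a b zs \<Longrightarrow> x \<in> set (k a) \<Longrightarrow> y \<in> set (k b) \<Longrightarrow> bef x y (concat (map k zs))"
  by (induction zs) auto

lemma bef_in_concat: "z \<in> set zs \<Longrightarrow> bef x y (k z) \<Longrightarrow> bef x y (concat (map k zs))"
  by (induction zs) auto

lemma bef_map_inj: "inj f \<Longrightarrow> bef (f a) (f b) (map f xs) \<longleftrightarrow> bef a b xs"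
  by (induction xs) (auto simp: inj_eq image_iff)

lemma topo_sort_bef: "topo_sort H xs \<longleftrightarrow> distinct xs \<and> set xs = verts H \<and> (\<forall>e\<in>arcs H. bef (tail H e) (head H e) xs)"
  by (simp add: topo_sort_def bef_def)

lemma topo_sort_acyclic:
  assumes "topo_sort H xs" shows "acyclic (arcs_ends H)"
proof -
  have d: "distinct xs" using assms by (simp add: topo_sort_bef)
  have "bef a b xs" if "(a,b) \<in> (arcs_ends H)\<^sup>+" for a b
    using that
  proof (induction rule: trancl_induct)
    case (base y) then show ?case using assms by (auto simp: topo_sort_bef arcs_ends_conv)
  next
    case (step y z) then show ?case using assms d by (auto simp: topo_sort_bef arcs_ends_conv intro: bef_trans)
  qed
  then show ?thesis using bef_irrefl[OF d] by (auto simp: acyclic_def)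
qed

lemma acyclic_rel_topo:
  assumes "finite V" "R \<subseteq> V \<times> V" "acyclic R"
  shows "\<exists>xs. distinct xs \<and> set xs = V \<and> (\<forall>(a,b)\<in>R. bef a b xs)"
  using assms
proof (induction "card V" arbitrary: V R)
  case 0
  then show ?case by (intro exI[of _ "[]"]) auto
next
  case (Suc n)
  then have "V \<noteq> {}" by auto
  then obtain v where "v \<in> V" by auto
  have "finite R" using Suc.prems finite_subset by (metis finite_SigmaI)
  then have "wf R" using Suc.prems finite_acyclic_wf by blast
  then obtain m where m: "m \<in> V" "\<And>y. (y, m) \<in> R \<Longrightarrow> y \<notin> V"
    using wfE_min[OF _ \<open>v \<in> V\<close>] by metis
  have nom: "(y, m) \<notin> R" for y using m Suc.prems(2) by blast
  define R' where "R' = R \<inter> ((V - {m}) \<times> (V - {m}))"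
  have "acyclic R'" unfolding R'_def using Suc.prems(3) acyclic_subset by blast
  moreover have "n = card (V - {m})" using Suc.hyps(2) m(1) Suc.prems(1) by simp
  ultimately obtain xs where xs: "distinct xs" "set xs = V - {m}" "\<forall>(a,b)\<in>R'. bef a b xs"
    using Suc.hyps(1)[of "V - {m}" R'] Suc.prems(1) unfolding R'_def by blast
  show ?case
  proof (intro exI[of _ "m # xs"] conjI ballI)
    show "distinct (m # xs)" using xs by simp
    show "set (m # xs) = V" using xs m by auto
    fix p assume "p \<in> R"
    then obtain a b where p: "p = (a,b)" "(a,b) \<in> R" by (cases p) auto
    then have "b \<noteq> m" "a \<in> V" "b \<in> V" using nom Suc.prems(2) by auto
    then show "case p of (a, b) \<Rightarrow> bef a b (m # xs)"
      using p xs unfolding R'_def by (cases "a = m") auto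
  qed
qed

lemma wf_acyclic_iff:
  assumes "wf_digraph H"
  shows "acyclic_digraph H \<longleftrightarrow> acyclic (arcs_ends H)"
proof -
  interpret wf_digraph H by fact
  show ?thesis
proof
  assume a: "acyclic_digraph H"
  show "acyclic (arcs_ends H)"
  proof (rule ccontr)
    assume "\<not> acyclic (arcs_ends H)"
    then obtain u where "(u,u) \<in> (arcs_ends H)\<^sup>+" by (auto simp: acyclic_def)
    then obtain p where "pre_digraph.awalk H u p u" "p \<noteq> []"
      using wf_digraph.reachable1_awalk[OF assms] by metis
    then have "closed_w p" by (auto simp: closed_w_def)
    then show False using wf_digraph.closed_w_imp_cycle[OF assms] a by (auto simp: acyclic_digraph_def)
  qed
next
  assume a: "acyclic (arcs_ends H)"
  show "acyclic_digraph H"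
  proof (rule ccontr)
    assume "\<not> acyclic_digraph H"
    then obtain p u where "pre_digraph.awalk H u p u" "p \<noteq> []"
      by (auto simp: acyclic_digraph_def pre_digraph.cycle_def)
    then have "(u,u) \<in> (arcs_ends H)\<^sup>+"
      using wf_digraph.reachable1_awalk[OF assms] by metis
    then show False using a by (auto simp: acyclic_def)
  qed
qed
qed

lemma topo_exists:
  assumes "wf_digraph H" "finite (verts H)" "acyclic_digraph H"
  shows "\<exists>xs. topo_sort H xs"
proof -
  have "arcs_ends H \<subseteq> verts H \<times> verts H"
    using assms(1) by (auto simp: arcs_ends_conv wf_digraph_def)
  then obtain xs where "distinct xs" "set xs = verts H" "\<forall>(a,b)\<in>arcs_ends H. bef a b xs"
    using acyclic_rel_topo[OF assms(2)] assms wf_acyclic_iff by metis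
  then show ?thesis unfolding topo_sort_bef by (auto simp: arcs_ends_conv)
qed

lemma acyclic_apath:
  assumes "wf_digraph H" "acyclic_digraph H" "pre_digraph.awalk H u p v"
  shows "pre_digraph.apath H u p v"
proof -
  interpret wf_digraph H by fact
  show ?thesis
proof (rule ccontr)
  assume "\<not> pre_digraph.apath H u p v"
  then have "\<not> distinct (pre_digraph.awalk_verts H u p)" using assms(3)
    by (simp add: pre_digraph.apath_def)
  then obtain q r s w where "pre_digraph.awalk H w r w" "0 < length r"
    using awalk_not_distinct_decomp[OF assms(3)] by metis
  then have "closed_w r" by (auto simp: closed_w_def)
  then show False using wf_digraph.closed_w_imp_cycle[OF assms(1)] assms(2) by (auto simp: acyclic_digraph_def)
qed
qed



definition cmap :: "'a set \<Rightarrow> 'a \<Rightarrow> 'a option" where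
  "cmap W v = (if v \<in> W then None else Some v)"

lemma contract_wf:
  assumes "wf_digraph G" "W \<subseteq> verts G"
  shows "wf_digraph (contract G W)"
  using assms unfolding wf_digraph_def contract_def by auto

lemma contract_simps:
  "verts (contract G W) = Some ` (verts G - W) \<union> {None}"
  "arcs (contract G W) = {e \<in> arcs G. \<not> (tail G e \<in> W \<and> head G e \<in> W)}"
  "tail (contract G W) e = cmap W (tail G e)"
  "head (contract G W) e = cmap W (head G e)"
  by (auto simp: contract_def cmap_def)

lemma RCI:
  assumes "e \<in> arcs G" "\<not> (tail G e \<in> W \<and> head G e \<in> W)"
  shows "(cmap W (tail G e), cmap W (head G e)) \<in> arcs_ends (contract G W)"
  using assms unfolding arcs_ends_conv contract_simps by auto

lemma RCE:
  assumes "(\<alpha>, \<beta>) \<in> arcs_ends (contract G W)"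
  shows "\<exists>e\<in>arcs G. \<not> (tail G e \<in> W \<and> head G e \<in> W) \<and> \<alpha> = cmap W (tail G e) \<and> \<beta> = cmap W (head G e)"
  using assms unfolding arcs_ends_conv contract_simps by auto

lemma rt_map:
  assumes "(x, y) \<in> (arcs_ends G)\<^sup>*"
  shows "(cmap W x, cmap W y) \<in> (arcs_ends (contract G W))\<^sup>*"
  using assms
proof (induction rule: rtrancl_induct)
  case base then show ?case by simp
next
  case (step y z)
  then obtain e where e: "e \<in> arcs G" "tail G e = y" "head G e = z" by (auto simp: arcs_ends_conv)
  show ?case
  proof (cases "y \<in> W \<and> z \<in> W")
    case True then show ?thesis using step by (simp add: cmap_def)
  next
    case False
    then have "(cmap W y, cmap W z) \<in> arcs_ends (contract G W)" using RCI[of e G W] e by auto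
    then show ?thesis using step by (meson rtrancl.rtrancl_into_rtrancl)
  qed
qed

lemma b_to_a:
  assumes "wf_digraph G" "W \<subseteq> verts G" "acyclic_digraph (contract G W)"
  shows "path_induced G W"
  unfolding path_induced_def
proof (intro ballI allI impI)
  interpret wf_digraph G by fact
  fix x y p assume xy: "x \<in> W" "y \<in> W" and ap: "apath x p y"
  then have aw: "awalk x p y" by (simp add: apath_def)
  show "pre_digraph.awalk (G \<restriction> W) x p y"
  proof (rule ccontr)
    assume "\<not> pre_digraph.awalk (G \<restriction> W) x p y"
    then obtain v where v: "v \<in> set (awalk_verts x p)" "v \<notin> W"
      using awalk_induce[OF aw] by blast
    have "(x, v) \<in> (arcs_ends G)\<^sup>*" "(v, y) \<in> (arcs_ends G)\<^sup>*"
      using awalk_verts_reachable_from[OF aw v(1)] awalk_verts_reachable_to[OF aw v(1)]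
      by (auto intro: reachable_rtranclI)
    then have "(None, Some v) \<in> (arcs_ends (contract G W))\<^sup>*" "(Some v, None) \<in> (arcs_ends (contract G W))\<^sup>*"
      using rt_map[of x v G W] rt_map[of v y G W] xy v by (auto simp: cmap_def)
    then have "(None, None) \<in> (arcs_ends (contract G W))\<^sup>+"
      by (metis option.distinct(1) rtrancl_eq_or_trancl trancl_rtrancl_trancl)
    then show False using assms(3) wf_acyclic_iff[OF contract_wf[OF assms(1,2)]]
      by (auto simp: acyclic_def)
  qed
qed

lemma RS_lemma:
  assumes "(\<alpha>, \<beta>) \<in> R\<^sup>+"
  shows "(\<alpha>, \<beta>) \<in> (R \<inter> (range Some \<times> range Some))\<^sup>+ \<or> ((\<alpha>, None) \<in> R\<^sup>* \<and> (None, \<beta>) \<in> R\<^sup>*)"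
  using assms
proof (induction rule: trancl_induct)
  case (base y)
  then show ?case
    by (cases \<alpha>; cases y) auto
next
  case (step y z)
  from step.IH show ?case
  proof
    assume a: "(\<alpha>, y) \<in> (R \<inter> range Some \<times> range Some)\<^sup>+"
    show ?thesis
    proof (cases "y \<noteq> None \<and> z \<noteq> None")
      case True
      then have "(y, z) \<in> R \<inter> range Some \<times> range Some" using step by auto
      then show ?thesis using a by (meson trancl.trancl_into_trancl)
    next
      case False
      have "(\<alpha>, y) \<in> R\<^sup>*" using a
        by (meson inf_le1 trancl_mono trancl_into_rtrancl)
      then show ?thesis using False step
        by (metis rtrancl.rtrancl_into_rtrancl rtrancl.rtrancl_refl)
    qed
  next
    assume "(\<alpha>, None) \<in> R\<^sup>* \<and> (None, y) \<in> R\<^sup>*"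
    then show ?thesis using step by (meson rtrancl.rtrancl_into_rtrancl)
  qed
qed

lemma None_lemma_gen:
  assumes "(\<alpha>, \<beta>) \<in> R\<^sup>+" "\<beta> = None"
  shows "\<alpha> = Some v \<Longrightarrow> \<exists>v'. (Some v, Some v') \<in> (R \<inter> (range Some \<times> range Some))\<^sup>* \<and> (Some v', None) \<in> R"
  using assms
proof (induction arbitrary: v rule: converse_trancl_induct)
  case (base y)
  then show ?case by auto
next
  case (step y z)
  show ?case
  proof (cases z)
    case None
    then show ?thesis using step by auto
  next
    case (Some u)
    then obtain u' where "(Some u, Some u') \<in> (R \<inter> range Some \<times> range Some)\<^sup>*" "(Some u', None) \<in> R"
      using step by blast
    moreover have "(Some v, Some u) \<in> R \<inter> range Some \<times> range Some" using step Some by auto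
    ultimately show ?thesis by (meson converse_rtrancl_into_rtrancl)
  qed
qed

lemma None_lemma:
  assumes "(Some v, None) \<in> R\<^sup>+"
  shows "\<exists>v'. (Some v, Some v') \<in> (R \<inter> (range Some \<times> range Some))\<^sup>* \<and> (Some v', None) \<in> R"
  using None_lemma_gen[OF assms refl refl] .

lemma my_rtrancl_map:
  assumes "\<And>x y. (x, y) \<in> r \<Longrightarrow> (f x, f y) \<in> s" "(a, b) \<in> r\<^sup>*"
  shows "(f a, f b) \<in> s\<^sup>*"
  using assms(2)
  by (induction rule: rtrancl_induct) (simp, meson assms(1) rtrancl.rtrancl_into_rtrancl)

lemma my_trancl_map:
  assumes "\<And>x y. (x, y) \<in> r \<Longrightarrow> (f x, f y) \<in> s" "(a, b) \<in> r\<^sup>+"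
  shows "(f a, f b) \<in> s\<^sup>+"
  using assms(2)
  by (induction rule: trancl_induct) (meson assms(1) r_into_trancl, meson assms(1) trancl.trancl_into_trancl)

lemma lift_RS:
  assumes "(Some a, Some b) \<in> (arcs_ends (contract G W) \<inter> (range Some \<times> range Some))\<^sup>*"
  shows "(a, b) \<in> (arcs_ends G)\<^sup>*"
proof -
  have "(the (Some a), the (Some b)) \<in> (arcs_ends G)\<^sup>*"
  proof (rule my_rtrancl_map[OF _ assms])
    fix x y assume xy: "(x, y) \<in> arcs_ends (contract G W) \<inter> range Some \<times> range Some"
    then obtain e where e: "e\<in>arcs G" "x = cmap W (tail G e)" "y = cmap W (head G e)"
      using RCE[of x y G W] by blast
    have "x \<noteq> None" "y \<noteq> None" using xy by blast+
    then have "the x = tail G e" "the y = head G e" using e(2,3) unfolding cmap_def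
      by (metis option.sel)+
    moreover have "(tail G e, head G e) \<in> arcs_ends G" using e(1) unfolding arcs_ends_conv by (rule rev_image_eqI) simp
    ultimately show "(the x, the y) \<in> arcs_ends G" by simp
  qed
  then show ?thesis by simp
qed

lemma lift_RS1:
  assumes "(Some a, Some b) \<in> (arcs_ends (contract G W) \<inter> (range Some \<times> range Some))\<^sup>+"
  shows "(a, b) \<in> (arcs_ends G)\<^sup>+"
proof -
  have "(the (Some a), the (Some b)) \<in> (arcs_ends G)\<^sup>+"
  proof (rule my_trancl_map[OF _ assms])
    fix x y assume xy: "(x, y) \<in> arcs_ends (contract G W) \<inter> range Some \<times> range Some"
    then obtain e where e: "e\<in>arcs G" "x = cmap W (tail G e)" "y = cmap W (head G e)"
      using RCE[of x y G W] by blast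
    have "x \<noteq> None" "y \<noteq> None" using xy by blast+
    then have "the x = tail G e" "the y = head G e" using e(2,3) unfolding cmap_def
      by (metis option.sel)+
    moreover have "(tail G e, head G e) \<in> arcs_ends G" using e(1) unfolding arcs_ends_conv by (rule rev_image_eqI) simp
    ultimately show "(the x, the y) \<in> arcs_ends G" by simp
  qed
  then show ?thesis by simp
qed

lemma a_to_b:
  assumes "wf_digraph G" "W \<subseteq> verts G" "acyclic_digraph G" "path_induced G W"
  shows "acyclic_digraph (contract G W)"
proof -
  interpret wf_digraph G by fact
  let ?R = "arcs_ends (contract G W)"
  let ?RS = "?R \<inter> (range Some \<times> range Some)"
  have acG: "acyclic (arcs_ends G)" using assms(3) wf_acyclic_iff[OF assms(1)] by simp
  have noNone: "(None, None) \<notin> ?R\<^sup>+"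
  proof
    assume nn: "(None, None) \<in> ?R\<^sup>+"
    then obtain \<gamma> where g1: "(None, \<gamma>) \<in> ?R" "(\<gamma>, None) \<in> ?R\<^sup>*"
      by (meson tranclD)
    have "\<gamma> \<noteq> None"
    proof
      assume "\<gamma> = None"
      then obtain e where "\<not> (tail G e \<in> W \<and> head G e \<in> W)" "None = cmap W (tail G e)" "None = cmap W (head G e)"
        using RCE[OF g1(1)] by blast
      then show False by (simp add: cmap_def split: if_splits)
    qed
    then obtain v where v: "\<gamma> = Some v" by auto
    with g1 have "(Some v, None) \<in> ?R\<^sup>+" by (simp add: rtrancl_eq_or_trancl)
    from None_lemma[OF this] obtain v' where v': "(Some v, Some v') \<in> ?RS\<^sup>*" "(Some v', None) \<in> ?R"
      by blast
    obtain e1 where e1': "e1 \<in> arcs G" "None = cmap W (tail G e1)" "Some v = cmap W (head G e1)"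
      using RCE[OF g1(1)[unfolded v]] by blast
    have "tail G e1 \<in> W" using e1'(2) by (simp add: cmap_def split: if_splits)
    moreover have "head G e1 = v \<and> v \<notin> W" using e1'(3) by (simp add: cmap_def split: if_splits)
    ultimately have e1: "e1 \<in> arcs G" "tail G e1 \<in> W" "head G e1 = v" "v \<notin> W"
      using e1'(1) by auto
    obtain e2 where e2': "e2 \<in> arcs G" "Some v' = cmap W (tail G e2)" "None = cmap W (head G e2)"
      using RCE[OF v'(2)] by blast
    have "head G e2 \<in> W" using e2'(3) by (simp add: cmap_def split: if_splits)
    moreover have "tail G e2 = v'" using e2'(2) by (simp add: cmap_def split: if_splits)
    ultimately have e2: "e2 \<in> arcs G" "tail G e2 = v'" "head G e2 \<in> W"
      using e2'(1) by auto
    have "(v, v') \<in> (arcs_ends G)\<^sup>*" using lift_RS[OF v'(1)] .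
    then have "(v, head G e2) \<in> (arcs_ends G)\<^sup>+" using e2
      by (metis in_arcs_imp_in_arcs_ends arc_to_ends_def rtrancl_into_trancl1)
    then obtain p2 where p2: "awalk v p2 (head G e2)" using reachable1_awalk by auto
    have "awalk (tail G e1) [e1] v" using arc_implies_awalk[OF e1(1)] e1(3) by simp
    then have aw: "awalk (tail G e1) ([e1] @ p2) (head G e2)" using p2 by (meson awalk_appendI)
    then have "apath (tail G e1) ([e1] @ p2) (head G e2)" using acyclic_apath[OF assms(1,3)] by blast
    then have "pre_digraph.awalk (G \<restriction> W) (tail G e1) ([e1] @ p2) (head G e2)"
      using assms(4) e1 e2 unfolding path_induced_def by blast
    then have "e1 \<in> arcs (G \<restriction> W)" by (auto simp: pre_digraph.awalk_def)
    then show False using e1 by simp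
  qed
  have "acyclic ?R"
    unfolding acyclic_def
  proof (intro allI notI)
    fix u assume u: "(u, u) \<in> ?R\<^sup>+"
    show False
    proof (cases u)
      case None then show False using u noNone by simp
    next
      case (Some a)
      from RS_lemma[OF u] show False
      proof
        assume "(u, u) \<in> ?RS\<^sup>+"
        then have "(a, a) \<in> (arcs_ends G)\<^sup>+" using lift_RS1 Some by metis
        then show False using acG by (auto simp: acyclic_def)
      next
        assume h: "(u, None) \<in> ?R\<^sup>* \<and> (None, u) \<in> ?R\<^sup>*"
        then have "(None, None) \<in> ?R\<^sup>+" using Some
          by (metis option.distinct(1) rtrancl_eq_or_trancl trancl_rtrancl_trancl)
        then show False using noNone by simp
      qed
    qed
  qed
  then show ?thesis using wf_acyclic_iff[OF contract_wf[OF assms(1,2)]] by simp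
qed



definition gk :: "'a list \<Rightarrow> 'a option \<Rightarrow> 'a list" where
  "gk ys z = (case z of None \<Rightarrow> ys | Some v \<Rightarrow> [v])"

definition gmap :: "'a list \<times> 'a option list \<Rightarrow> 'a list" where
  "gmap p = concat (map (gk (fst p)) (snd p))"

definition fmap :: "'a set \<Rightarrow> 'a list \<Rightarrow> 'a list \<times> 'a option list" where
  "fmap W xs = (filter (\<lambda>x. x \<in> W) xs,
     map Some (takeWhile (\<lambda>x. x \<notin> W) xs) @ None # map Some (dropWhile (\<lambda>x. x \<in> W) (dropWhile (\<lambda>x. x \<notin> W) xs)))"

lemma gmap_eq: "gmap (ys, map Some as @ None # map Some cs) = as @ ys @ cs"
proof -
  have "concat (map (gk ys) (map Some xs)) = xs" for xs :: "'a list"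
    by (induction xs) (auto simp: gk_def)
  then show ?thesis by (simp add: gmap_def gk_def)
qed

lemma fmap_eq:
  assumes "set bs = W" "bs \<noteq> []" "set as \<inter> W = {}" "set cs \<inter> W = {}"
  shows "fmap W (as @ bs @ cs) = (bs, map Some as @ None # map Some cs)"
proof -
  obtain b bs' where b: "bs = b # bs'" using assms(2) by (cases bs) auto
  have "filter (\<lambda>x. x \<in> W) as = []" "filter (\<lambda>x. x \<in> W) cs = []" "filter (\<lambda>x. x \<in> W) bs = bs"
    using assms by (auto intro: filter_False filter_True)
  then have f: "filter (\<lambda>x. x \<in> W) (as @ bs @ cs) = bs" by simp
  have t: "takeWhile (\<lambda>x. x \<notin> W) (as @ bs @ cs) = as"
    using assms b by (subst takeWhile_append2) auto
  have d1: "dropWhile (\<lambda>x. x \<notin> W) (as @ bs @ cs) = bs @ cs"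
    using assms b by (subst dropWhile_append2) auto
  have d2: "dropWhile (\<lambda>x. x \<in> W) (bs @ cs) = cs"
    using assms by (cases cs) (auto simp: dropWhile_append2)
  show ?thesis unfolding fmap_def f t d1 d2 by simp
qed

lemma bef_map: "bef a b xs \<Longrightarrow> bef (f a) (f b) (map f xs)"
  by (induction xs) auto

lemma forward:
  assumes tG: "topo_sort G (as @ bs @ cs)" and bs: "set bs = W"
  shows "topo_sort (G \<restriction> W) bs \<and> topo_sort (contract G W) (map Some as @ None # map Some cs)"
proof -
  let ?xs = "as @ bs @ cs"
  have d: "distinct ?xs" and s: "set ?xs = verts G" and a: "\<forall>e\<in>arcs G. bef (tail G e) (head G e) ?xs"
    using tG by (auto simp: topo_sort_bef)
  have disj: "set as \<inter> W = {}" "set cs \<inter> W = {}" "set as \<inter> set cs = {}"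
    using d bs by auto
  have t1: "topo_sort (G \<restriction> W) bs"
    unfolding topo_sort_bef
  proof (intro conjI ballI)
    show "distinct bs" using d by simp
    show "set bs = verts (G \<restriction> W)" using bs by simp
    fix e assume e: "e \<in> arcs (G \<restriction> W)"
    then have "bef (tail G e) (head G e) ?xs" "tail G e \<in> W" "head G e \<in> W" using a by auto
    then show "bef (tail (G \<restriction> W) e) (head (G \<restriction> W) e) bs"
      using disj by (auto dest: bef_set)
  qed
  have t2: "topo_sort (contract G W) (map Some as @ None # map Some cs)"
    unfolding topo_sort_bef
  proof (intro conjI ballI)
    show "distinct (map Some as @ None # map Some cs)" using d disj by (auto simp: distinct_map)
    show "set (map Some as @ None # map Some cs) = verts (contract G W)"
      using s bs disj unfolding contract_simps by auto
    fix e assume e: "e \<in> arcs (contract G W)"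
    then have e': "e \<in> arcs G" "\<not> (tail G e \<in> W \<and> head G e \<in> W)" unfolding contract_simps by auto
    have b: "bef (tail G e) (head G e) ?xs" using a e' by auto
    then have ne: "tail G e \<noteq> head G e" using bef_irrefl[OF d] by metis
    have ne2: "cmap W (tail G e) \<noteq> cmap W (head G e)" using ne e'(2) by (auto simp: cmap_def)
    have mb: "bef (cmap W (tail G e)) (cmap W (head G e)) (map (cmap W) ?xs)"
      by (rule bef_map[OF b])
    have m: "map (cmap W) ?xs = map Some as @ map (\<lambda>_. None) bs @ map Some cs"
      using disj bs by (auto simp: cmap_def)
    have nb: "\<not> bef \<alpha> \<beta> (map (\<lambda>_. None) bs)" if "\<alpha> \<noteq> \<beta>" for \<alpha> \<beta> :: "'a option"
      using that bef_set[of \<alpha> \<beta> "map (\<lambda>_. None) bs"] by auto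
    show "bef (tail (contract G W) e) (head (contract G W) e) (map Some as @ None # map Some cs)"
      unfolding contract_simps using mb[unfolded m] ne2 nb[OF ne2] bs
      by (auto dest: bef_set simp: cmap_def split: if_splits)
  qed
  show ?thesis using t1 t2 by simp
qed

lemma map_Some_the: "None \<notin> set p \<Longrightarrow> p = map Some (map the p)"
  by (induction p) auto

lemma zs_decomp:
  assumes "topo_sort (contract G W) zs"
  shows "\<exists>as cs. zs = map Some as @ None # map Some cs"
proof -
  have "None \<in> set zs" using assms by (auto simp: topo_sort_bef contract_simps)
  then obtain p q where pq: "zs = p @ None # q" by (meson split_list)
  then have "None \<notin> set p" "None \<notin> set q" using assms by (auto simp: topo_sort_bef)
  then have "p = map Some (map the p)" "q = map Some (map the q)"
    using map_Some_the by blast+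
  then show ?thesis using pq by metis
qed

lemma backward:
  assumes "W \<subseteq> verts G"
    and ty: "topo_sort (G \<restriction> W) ys" and tz: "topo_sort (contract G W) (map Some as @ None # map Some cs)"
  shows "topo_sort G (as @ ys @ cs)"
proof -
  let ?zs = "map Some as @ None # map Some cs"
  have dz: "distinct ?zs" and sz: "set ?zs = verts (contract G W)"
    and az: "\<forall>e\<in>arcs (contract G W). bef (tail (contract G W) e) (head (contract G W) e) ?zs"
    using tz by (auto simp: topo_sort_bef)
  have dy: "distinct ys" and sy: "set ys = W" and ay: "\<forall>e\<in>arcs (G \<restriction> W). bef (tail G e) (head G e) ys"
    using ty by (auto simp: topo_sort_bef)
  have sac: "set as \<union> set cs = verts G - W"
  proof -
    have "Some ` (set as \<union> set cs) \<union> {None} = Some ` (verts G - W) \<union> {None}"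
      using sz unfolding contract_simps by auto
    then have "Some ` (set as \<union> set cs) = Some ` (verts G - W)" by auto
    then show ?thesis by (meson inj_Some inj_image_eq_iff)
  qed
  have dac: "distinct as" "distinct cs" "set as \<inter> set cs = {}" using dz by (auto simp: distinct_map)
  show ?thesis
    unfolding topo_sort_bef
  proof (intro conjI ballI)
    show "distinct (as @ ys @ cs)" using dac dy sy sac by auto
    show "set (as @ ys @ cs) = verts G" using sac sy assms(1) by auto
    fix e assume e: "e \<in> arcs G"
    show "bef (tail G e) (head G e) (as @ ys @ cs)"
    proof (cases "tail G e \<in> W \<and> head G e \<in> W")
      case True
      then have "bef (tail G e) (head G e) ys" using ay e by auto
      then show ?thesis by simp
    next
      case False
      then have "bef (cmap W (tail G e)) (cmap W (head G e)) ?zs"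
        using az e unfolding contract_simps by auto
      then have b: "bef (tail G e) (head G e) (concat (map (gk ys) ?zs))"
        by (rule bef_concat) (auto simp: gk_def cmap_def sy)
      have eq: "concat (map (gk ys) ?zs) = as @ ys @ cs"
        using gmap_eq[of ys as cs] unfolding gmap_def fst_conv snd_conv .
      show ?thesis using b unfolding eq .
    qed
  qed
qed



theorem lemma3p20:
  fixes G :: "('a,'b) pre_digraph" and W :: "'a set"
  assumes "fin_digraph G"
    and "acyclic_digraph G"
    and "W \<subseteq> verts G"
    and "connected (G \<restriction> W)"
  shows "(path_induced G W \<longleftrightarrow> acyclic_digraph (contract G W))
    \<and> (acyclic_digraph (contract G W) \<longleftrightarrow> (\<exists>xs. topo_sort G xs \<and> consecutive_in W xs))
    \<and> (path_induced G W \<longrightarrow>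
         (\<exists>f. bij_betw f {xs. topo_sort G xs \<and> consecutive_in W xs}
                ({ys. topo_sort (G \<restriction> W) ys} \<times> {zs. topo_sort (contract G W) zs})))"
proof -
  have wf: "wf_digraph G" using assms(1) by (rule fin_digraph.axioms(1))
  have finV: "finite (verts G)" using assms(1) by (simp add: fin_digraph_def fin_digraph_axioms_def)
  have Wne: "W \<noteq> {}" using assms(4) by (auto simp: connected_def strongly_connected_def)
  have wfC: "wf_digraph (contract G W)" using contract_wf[OF wf assms(3)] .
  have finC: "finite (verts (contract G W))" using finV by (simp add: contract_simps)
  have wfW: "wf_digraph (G \<restriction> W)" using wf by (rule wf_digraph.wellformed_induce_subgraph)
  have finW: "finite (verts (G \<restriction> W))" using finV assms(3) finite_subset by auto
  have acW: "acyclic_digraph (G \<restriction> W)"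
  proof -
    have "acyclic (arcs_ends G)" using assms(2) wf_acyclic_iff[OF wf] by simp
    moreover have "arcs_ends (G \<restriction> W) \<subseteq> arcs_ends G" by (auto simp: arcs_ends_conv)
    ultimately show ?thesis using wf_acyclic_iff[OF wfW] acyclic_subset by blast
  qed
  have ab: "path_induced G W \<longleftrightarrow> acyclic_digraph (contract G W)"
    using a_to_b[OF wf assms(3) assms(2)] b_to_a[OF wf assms(3)] by blast
  have bc: "acyclic_digraph (contract G W) \<longleftrightarrow> (\<exists>xs. topo_sort G xs \<and> consecutive_in W xs)"
  proof
    assume "acyclic_digraph (contract G W)"
    then obtain zs where zs: "topo_sort (contract G W) zs" using topo_exists[OF wfC finC] by blast
    obtain ys where ys: "topo_sort (G \<restriction> W) ys" using topo_exists[OF wfW finW acW] by blast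
    obtain as cs where "zs = map Some as @ None # map Some cs" using zs_decomp[OF zs] by blast
    then have "topo_sort G (as @ ys @ cs)" using backward[OF assms(3) ys] zs by simp
    moreover have "set ys = W" using ys by (simp add: topo_sort_bef)
    ultimately show "\<exists>xs. topo_sort G xs \<and> consecutive_in W xs"
      unfolding consecutive_in_def by blast
  next
    assume "\<exists>xs. topo_sort G xs \<and> consecutive_in W xs"
    then obtain as bs cs where "topo_sort G (as @ bs @ cs)" "set bs = W"
      unfolding consecutive_in_def by blast
    then have "topo_sort (contract G W) (map Some as @ None # map Some cs)" using forward by blast
    then have "acyclic (arcs_ends (contract G W))" by (rule topo_sort_acyclic)
    then show "acyclic_digraph (contract G W)" using wf_acyclic_iff[OF wfC] by simp
  qed
  let ?A = "{xs. topo_sort G xs \<and> consecutive_in W xs}"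
  let ?B = "{ys. topo_sort (G \<restriction> W) ys} \<times> {zs. topo_sort (contract G W) zs}"
  have decA: "\<exists>as bs cs. xs = as @ bs @ cs \<and> set bs = W \<and> bs \<noteq> [] \<and> set as \<inter> W = {} \<and> set cs \<inter> W = {}
     \<and> topo_sort (G \<restriction> W) bs \<and> topo_sort (contract G W) (map Some as @ None # map Some cs)"
    if "xs \<in> ?A" for xs
  proof -
    from that obtain as bs cs where abc: "xs = as @ bs @ cs" "set bs = W" "topo_sort G (as @ bs @ cs)"
      unfolding consecutive_in_def by blast
    then have "distinct (as @ bs @ cs)" by (simp add: topo_sort_bef)
    moreover have "bs \<noteq> []" using abc(2) Wne by auto
    ultimately have "set as \<inter> W = {}" "set cs \<inter> W = {}" "bs \<noteq> []" using abc(2) by auto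
    then show ?thesis using abc forward[OF abc(3) abc(2)] by blast
  qed
  have bij: "bij_betw (fmap W) ?A ?B"
  proof (rule bij_betw_byWitness[where f' = gmap])
    show "\<forall>a\<in>?A. gmap (fmap W a) = a"
    proof
      fix xs assume "xs \<in> ?A"
      then obtain as bs cs where "xs = as @ bs @ cs" "set bs = W" "bs \<noteq> []" "set as \<inter> W = {}" "set cs \<inter> W = {}"
        using decA by blast
      then show "gmap (fmap W xs) = xs" using fmap_eq gmap_eq by metis
    qed
    show "fmap W ` ?A \<subseteq> ?B"
    proof
      fix p assume "p \<in> fmap W ` ?A"
      then obtain xs where "xs \<in> ?A" "p = fmap W xs" by blast
      then obtain as bs cs where "xs = as @ bs @ cs" "set bs = W" "bs \<noteq> []" "set as \<inter> W = {}" "set cs \<inter> W = {}"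
        "topo_sort (G \<restriction> W) bs" "topo_sort (contract G W) (map Some as @ None # map Some cs)"
        using decA by blast
      then have "fmap W xs = (bs, map Some as @ None # map Some cs)" using fmap_eq by blast
      then show "p \<in> ?B" using \<open>p = fmap W xs\<close> \<open>topo_sort (G \<restriction> W) bs\<close>
        \<open>topo_sort (contract G W) (map Some as @ None # map Some cs)\<close> by simp
    qed
    have decB: "\<exists>as cs. zs = map Some as @ None # map Some cs \<and> gmap (ys, zs) = as @ ys @ cs
       \<and> set as \<inter> W = {} \<and> set cs \<inter> W = {} \<and> set ys = W \<and> ys \<noteq> [] \<and> topo_sort G (as @ ys @ cs)"
      if "(ys, zs) \<in> ?B" for ys zs
    proof -
      from that have ys: "topo_sort (G \<restriction> W) ys" and zs: "topo_sort (contract G W) zs" by auto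
      obtain as cs where z: "zs = map Some as @ None # map Some cs" using zs_decomp[OF zs] by blast
      have t: "topo_sort G (as @ ys @ cs)" using backward[OF assms(3) ys] zs z by simp
      have "set ys = W" using ys by (simp add: topo_sort_bef)
      moreover have "distinct (as @ ys @ cs)" using t by (simp add: topo_sort_bef)
      moreover have "ys \<noteq> []" using \<open>set ys = W\<close> Wne by auto
      ultimately have "set as \<inter> W = {}" "set cs \<inter> W = {}" "set ys = W" "ys \<noteq> []" by auto
      then show ?thesis using z t gmap_eq by blast
    qed
    show "\<forall>a'\<in>?B. fmap W (gmap a') = a'"
    proof
      fix p assume "p \<in> ?B"
      then obtain ys zs where p: "p = (ys, zs)" "(ys, zs) \<in> ?B" by (cases p) auto
      then obtain as cs where "zs = map Some as @ None # map Some cs" "gmap (ys, zs) = as @ ys @ cs"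
        "set as \<inter> W = {}" "set cs \<inter> W = {}" "set ys = W" "ys \<noteq> []"
        using decB by blast
      then show "fmap W (gmap p) = p" using fmap_eq p(1) by metis
    qed
    show "gmap ` ?B \<subseteq> ?A"
    proof
      fix xs assume "xs \<in> gmap ` ?B"
      then obtain ys zs where p: "xs = gmap (ys, zs)" "(ys, zs) \<in> ?B" by auto
      then obtain as cs where "gmap (ys, zs) = as @ ys @ cs" "set ys = W" "topo_sort G (as @ ys @ cs)"
        using decB by blast
      then show "xs \<in> ?A" using p(1) unfolding consecutive_in_def by auto
    qed
  qed
  show ?thesis using ab bc bij by blast
qed

end
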